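(* Fix $k\ge1$, an index $1\le i\le k$, and constants $a,b,c\ge0$. For each $n$ let $(X_1,\dots,X_k)$ be an interval partition of $[n]$ and let $\phi$ be a labeling of the pairs of $[n]$ as described in the context. If $|X_{i-1}|=(a+o(1))n$, $|X_i|=(b+o(1))n$ and $|X_{i+1}|=(c+o(1))n$ as $n\to\infty$, then the number of bad triples $u<v<w$ with $v\in X_i$ is $\left[(a+b)b(b+c)+o(1)\right]\binom{n}{3}$.
   Context: An interval partition $(X_1,\dots,X_k)$ of $[n]$ is a sequence of disjoint (possibly empty) intervals of $[n]$ with union $[n]$ and $X_p<X_q$ (every element of $X_p$ below every element of $X_q$) for $p<q$; by convention $X_0=X_{k+1}=\emptyset$. For $u\in X_p$, the fractional index of $u$ in $X_p$ is $\lambda_u=(u+1-\min X_p)/|X_p|\in(0,1]$. The labeling $\phi$ of pairs $u<v$ with $u\in X_p$, $v\in X_q$ is defined by: if $p=q$ then $\phi(uv)=p$; if $q-p\ge2$ then $\phi(uv)$ is some integer with $p<\phi(uv)<q$; if $q=p+1$ then $\phi(uv)=p$ when $\lambda_u+\lambda_v\le1$ and $\phi(uv)=p+1$ when $\lambda_u+\lambda_v>1$. A triple $u<v<w$ is good if $\phi(uv)<\phi(vw)$ and bad otherwise. *)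

theory Defs
  imports Complex_Main
begin

definition is_interval_nat :: "nat set \<Rightarrow> bool" where
  "is_interval_nat S \<longleftrightarrow> (\<forall>x\<in>S. \<forall>y\<in>S. \<forall>z. x \<le> z \<and> z \<le> y \<longrightarrow> z \<in> S)"

text \<open>An interval partition (X 1, ..., X k) of [n] = {1..n}; the function X is
  extended by the convention X p = {} for p outside {1..k} (so X 0 = X (k+1) = {}).\<close>
definition interval_partition :: "nat \<Rightarrow> nat \<Rightarrow> (nat \<Rightarrow> nat set) \<Rightarrow> bool" where
  "interval_partition n k X \<longleftrightarrow>
     (\<forall>p. p \<notin> {1..k} \<longrightarrow> X p = {}) \<and>
     (\<forall>p\<in>{1..k}. is_interval_nat (X p)) \<and>
     (\<forall>p\<in>{1..k}. \<forall>q\<in>{1..k}. p \<noteq> q \<longrightarrow> X p \<inter> X q = {}) \<and>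
     (\<Union>p\<in>{1..k}. X p) = {1..n} \<and>
     (\<forall>p\<in>{1..k}. \<forall>q\<in>{1..k}. p < q \<longrightarrow> (\<forall>x\<in>X p. \<forall>y\<in>X q. x < y))"

definition part_idx :: "nat \<Rightarrow> (nat \<Rightarrow> nat set) \<Rightarrow> nat \<Rightarrow> nat" where
  "part_idx k X u = (THE p. p \<in> {1..k} \<and> u \<in> X p)"

definition frac_idx :: "nat \<Rightarrow> (nat \<Rightarrow> nat set) \<Rightarrow> nat \<Rightarrow> real" where
  "frac_idx k X u =
     (let P = X (part_idx k X u) in (real u + 1 - real (Min P)) / real (card P))"

definition valid_labeling :: "nat \<Rightarrow> nat \<Rightarrow> (nat \<Rightarrow> nat set) \<Rightarrow> (nat \<Rightarrow> nat \<Rightarrow> nat) \<Rightarrow> bool" where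
  "valid_labeling n k X \<phi> \<longleftrightarrow>
     (\<forall>u v. 1 \<le> u \<and> u < v \<and> v \<le> n \<longrightarrow>
        (let p = part_idx k X u; q = part_idx k X v in
          (p = q \<longrightarrow> \<phi> u v = p) \<and>
          (p + 2 \<le> q \<longrightarrow> p < \<phi> u v \<and> \<phi> u v < q) \<and>
          (q = p + 1 \<longrightarrow>
             \<phi> u v = (if frac_idx k X u + frac_idx k X v \<le> 1 then p else p + 1))))"

definition bad_triples :: "nat \<Rightarrow> (nat \<Rightarrow> nat set) \<Rightarrow> (nat \<Rightarrow> nat \<Rightarrow> nat) \<Rightarrow> nat \<Rightarrow> (nat \<times> nat \<times> nat) set" where
  "bad_triples n X \<phi> i =
     {(u, v, w). 1 \<le> u \<and> u < v \<and> v < w \<and> w \<le> n \<and> v \<in> X i \<and> \<not> (\<phi> u v < \<phi> v w)}"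

end

theory Submission
  imports Defs
begin


locale ipart =
  fixes n k :: nat and X :: "nat \<Rightarrow> nat set"
  assumes ip: "interval_partition n k X"
begin

lemma out_empty: "p \<notin> {1..k} \<Longrightarrow> X p = {}"
  using ip unfolding interval_partition_def by (elim conjE) blast

lemma sub: "X p \<subseteq> {1..n}"
proof (cases "p \<in> {1..k}")
  case True
  then have "X p \<subseteq> (\<Union>p\<in>{1..k}. X p)" by blast
  also have "\<dots> = {1..n}" using ip unfolding interval_partition_def by (elim conjE)
  finally show ?thesis .
next
  case False then show ?thesis using out_empty by simp
qed

lemma fin: "finite (X p)"
  using sub finite_subset by blast

lemma disj: "p \<noteq> q \<Longrightarrow> X p \<inter> X q = {}"
proof -
  assume "p \<noteq> q"
  show ?thesis
  proof (cases "p \<in> {1..k} \<and> q \<in> {1..k}")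
    case True
    have "\<forall>p\<in>{1..k}. \<forall>q\<in>{1..k}. p \<noteq> q \<longrightarrow> X p \<inter> X q = {}"
      using ip unfolding interval_partition_def by (elim conjE)
    then show ?thesis using True \<open>p \<noteq> q\<close> by blast
  next
    case False then show ?thesis using out_empty by auto
  qed
qed

lemma nonempty_idx: "u \<in> X p \<Longrightarrow> p \<in> {1..k}"
  using out_empty by blast

lemma pidx: "u \<in> X p \<Longrightarrow> part_idx k X u = p"
  unfolding part_idx_def
proof (rule the_equality)
  assume "u \<in> X p"
  then show "p \<in> {1..k} \<and> u \<in> X p" using nonempty_idx by blast
next
  fix q assume "u \<in> X p" "q \<in> {1..k} \<and> u \<in> X q"
  then show "q = p" using disj by blast
qed

lemma cover: "u \<in> {1..n} \<Longrightarrow> \<exists>p. u \<in> X p"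
proof -
  assume "u \<in> {1..n}"
  moreover have "(\<Union>p\<in>{1..k}. X p) = {1..n}" using ip unfolding interval_partition_def by (elim conjE)
  ultimately show ?thesis by blast
qed

lemma ord: "u \<in> X p \<Longrightarrow> v \<in> X q \<Longrightarrow> p < q \<Longrightarrow> u < v"
proof -
  assume a: "u \<in> X p" "v \<in> X q" "p < q"
  have o: "\<forall>p\<in>{1..k}. \<forall>q\<in>{1..k}. p < q \<longrightarrow> (\<forall>x\<in>X p. \<forall>y\<in>X q. x < y)"
    using ip unfolding interval_partition_def by (elim conjE)
  have "p \<in> {1..k}" "q \<in> {1..k}" using a nonempty_idx by blast+
  then show ?thesis using o a by blast
qed

lemma mono: "u \<in> X p \<Longrightarrow> v \<in> X q \<Longrightarrow> u < v \<Longrightarrow> p \<le> q"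
  using ord[of v q u p] by fastforce

lemma ivl: "X p = {Min (X p)..<Min (X p) + card (X p)}"
proof (cases "X p = {}")
  case True then show ?thesis by simp
next
  case False
  have pk: "p \<in> {1..k}" using False nonempty_idx by blast
  have "\<forall>p\<in>{1..k}. is_interval_nat (X p)" using ip unfolding interval_partition_def by (elim conjE)
  then have iv: "is_interval_nat (X p)" using pk by blast
  have mi: "Min (X p) \<in> X p" using False fin by (rule_tac Min_in) auto
  have ma: "Max (X p) \<in> X p" using False fin by (rule_tac Max_in) auto
  have eq: "X p = {Min (X p)..Max (X p)}"
  proof (intro set_eqI iffI)
    fix x assume "x \<in> X p"
    then have "Min (X p) \<le> x" "x \<le> Max (X p)" using fin by (simp_all add: Min_le Max_ge)
    then show "x \<in> {Min (X p)..Max (X p)}" by simp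
  next
    fix x assume "x \<in> {Min (X p)..Max (X p)}"
    then have "Min (X p) \<le> x" "x \<le> Max (X p)" by simp_all
    then show "x \<in> X p" using iv mi ma unfolding is_interval_nat_def by blast
  qed
  have le: "Min (X p) \<le> Max (X p)" using mi fin by (simp add: Min_le)
  have "{Min (X p)..Max (X p)} = {Min (X p)..<Min (X p) + (Max (X p) + 1 - Min (X p))}"
    using le by auto
  moreover have "card (X p) = Max (X p) + 1 - Min (X p)" by (subst eq) simp
  ultimately show ?thesis using eq by simp
qed

lemma frac: "u \<in> X p \<Longrightarrow> frac_idx k X u = real (u + 1 - Min (X p)) / real (card (X p))"
proof -
  assume u: "u \<in> X p"
  have "Min (X p) \<le> u" using u fin by (simp add: Min_le)
  then show ?thesis unfolding frac_idx_def Let_def pidx[OF u] by (simp add: of_nat_diff)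
qed

end

lemma cnt_le:
  fixes \<theta> :: real assumes "0 \<le> \<theta>" "\<theta> \<le> 1"
  shows "card {u \<in> {m..<m+A}. real (u+1-m) / real A \<le> \<theta>} = nat \<lfloor>real A * \<theta>\<rfloor>"
proof (cases "A = 0")
  case True then show ?thesis by simp
next
  case False
  define K where "K = nat \<lfloor>real A * \<theta>\<rfloor>"
  have "real A * \<theta> \<le> real A" using assms by (simp add: mult_left_le)
  then have "\<lfloor>real A * \<theta>\<rfloor> \<le> int A" by (simp add: floor_le_iff)
  then have KA: "K \<le> A" unfolding K_def by simp
  have "{u \<in> {m..<m+A}. real (u+1-m) / real A \<le> \<theta>} = {m..<m+K}"
  proof (intro set_eqI iffI)
    fix u assume "u \<in> {u \<in> {m..<m+A}. real (u+1-m) / real A \<le> \<theta>}"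
    then have u: "m \<le> u" "u < m + A" "real (u+1-m) \<le> real A * \<theta>" using False
      by (auto simp: divide_le_eq mult.commute)
    then have "int (u+1-m) \<le> \<lfloor>real A * \<theta>\<rfloor>" by (simp add: le_floor_iff)
    then have "u + 1 - m \<le> K" unfolding K_def by linarith
    then show "u \<in> {m..<m+K}" using u by auto
  next
    fix u assume u: "u \<in> {m..<m+K}"
    then have "int (u+1-m) \<le> \<lfloor>real A * \<theta>\<rfloor>" unfolding K_def by auto
    then have "real (u+1-m) \<le> real A * \<theta>" by (simp add: le_floor_iff)
    then show "u \<in> {u \<in> {m..<m+A}. real (u+1-m) / real A \<le> \<theta>}" using u KA False
      by (auto simp: divide_le_eq mult.commute)
  qed
  then show ?thesis unfolding K_def by simp
qed

lemma cnt_gt: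
  fixes \<theta> :: real assumes "0 \<le> \<theta>" "\<theta> \<le> 1"
  shows "card {u \<in> {m..<m+A}. real (u+1-m) / real A > \<theta>} = A - nat \<lfloor>real A * \<theta>\<rfloor>"
proof -
  define S where "S = {u \<in> {m..<m+A}. real (u+1-m) / real A \<le> \<theta>}"
  have e: "{u \<in> {m..<m+A}. real (u+1-m) / real A > \<theta>} = {m..<m+A} - S"
    unfolding S_def by auto
  have "S \<subseteq> {m..<m+A}" "finite S" unfolding S_def by auto
  then have "card ({m..<m+A} - S) = card {m..<m+A} - card S" by (simp add: card_Diff_subset)
  then show ?thesis using e cnt_le[OF assms, of m A] unfolding S_def by simp
qed

lemma floor_bounds:
  fixes x :: real assumes "0 \<le> x"
  shows "x - 1 < real (nat \<lfloor>x\<rfloor>)" "real (nat \<lfloor>x\<rfloor>) \<le> x"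
  using assms by (simp_all add: of_nat_nat)


lemma xy_bound:
  fixes x y XX YY :: real
  assumes "0 \<le> x" "x \<le> XX" "XX - 1 \<le> x" "0 \<le> y" "y \<le> YY" "YY - 1 \<le> y"
  shows "0 \<le> XX*YY - x*y" "XX*YY - x*y \<le> XX + YY"
proof -
  have e: "XX*YY - x*y = XX*(YY-y) + y*(XX-x)" by (simp add: algebra_simps)
  have a: "0 \<le> XX*(YY-y)" using assms by simp
  have b: "0 \<le> y*(XX-x)" using assms by simp
  have c: "XX*(YY-y) \<le> XX*1" using assms by (intro mult_left_mono) auto
  have d: "y*(XX-x) \<le> YY*1" using assms by (intro mult_mono) auto
  show "0 \<le> XX*YY - x*y" using e a b by linarith
  show "XX*YY - x*y \<le> XX + YY" using e c d by linarith
qed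

lemma per_v:
  fixes v m B A C :: nat
  assumes "m \<le> v" "v < m + B"
  defines "t \<equiv> real (v+1-m) / real B"
  defines "x \<equiv> real ((v - m) + (A - nat \<lfloor>real A * (1 - t)\<rfloor>))"
  defines "y \<equiv> real ((m + B - (v + 1)) + nat \<lfloor>real C * (1 - t)\<rfloor>)"
  shows "0 \<le> t*(A+B) * ((1-t)*(B+C)) - x*y"
        "t*(A+B) * ((1-t)*(B+C)) - x*y \<le> t*(A+B) + (1-t)*(B+C)"
proof -
  have B0: "0 < B" using assms by simp
  define j where "j = real (v+1-m)"
  have j: "real (v - m) = j - 1" "real (m + B - (v+1)) = real B - j" "1 \<le> j" "j \<le> real B"
    unfolding j_def using assms(1,2) by (auto simp: of_nat_diff)
  have tB: "t * real B = j" unfolding t_def j_def using B0 by simp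
  have t0: "0 \<le> t" "t \<le> 1" unfolding t_def using assms(1,2) by auto
  define fa where "fa = real (nat \<lfloor>real A * (1 - t)\<rfloor>)"
  define fc where "fc = real (nat \<lfloor>real C * (1 - t)\<rfloor>)"
  have fa: "real A * (1-t) - 1 < fa" "fa \<le> real A * (1-t)" unfolding fa_def using t0 by (simp_all add: of_nat_nat)
  have fc: "real C * (1-t) - 1 < fc" "fc \<le> real C * (1-t)" unfolding fc_def using t0 by (simp_all add: of_nat_nat)
  have faA: "fa \<le> real A" using fa t0 by (smt (verit) mult_left_le of_nat_0_le_iff)
  have "nat \<lfloor>real A * (1 - t)\<rfloor> \<le> A" using faA unfolding fa_def by linarith
  then have xe: "x = j - 1 + real A - fa" unfolding x_def fa_def using j by (simp add: of_nat_diff)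
  have ye: "y = real B - j + fc" unfolding y_def fc_def using j by simp
  have "0 \<le> x" unfolding x_def by simp
  moreover have "0 \<le> y" unfolding y_def by simp
  moreover have "x \<le> t*(A+B)" "t*(A+B) - 1 \<le> x" using xe fa tB by (simp_all add: algebra_simps)
  moreover have "y \<le> (1-t)*(B+C)" "(1-t)*(B+C) - 1 \<le> y" using ye fc tB by (simp_all add: algebra_simps)
  ultimately show "0 \<le> t*(A+B) * ((1-t)*(B+C)) - x*y"
        "t*(A+B) * ((1-t)*(B+C)) - x*y \<le> t*(A+B) + (1-t)*(B+C)"
    using xy_bound by blast+
qed

lemma sum1: "(\<Sum>j<B. real (j+1)) = real B * (real B + 1) / 2"
  by (induction B) (simp_all add: field_simps)

lemma sum2: "(\<Sum>j<B. real (j+1)^2) = real B * (real B + 1) * (2 * real B + 1) / 6"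
  by (induction B) (simp_all add: field_simps power2_eq_square)

lemma sumj: "(\<Sum>j<B. real (j+1) * (real B - real (j+1))) = (real B ^ 3 - real B) / 6"
proof -
  have "(\<Sum>j<B. real (j+1) * (real B - real (j+1))) = real B * (\<Sum>j<B. real (j+1)) - (\<Sum>j<B. real (j+1)^2)"
    by (simp add: sum_distrib_left sum_subtractf algebra_simps power2_eq_square)
  also have "\<dots> = (real B ^ 3 - real B) / 6" unfolding sum1 sum2 by (simp add: field_simps power3_eq_cube)
  finally show ?thesis .
qed

lemma shift: "(\<Sum>v\<in>{m..<m+B}. f (v+1-m)) = (\<Sum>j<B. f (j+1 :: nat))"
proof -
  have "(\<Sum>v\<in>{0+m..<B+m}. f (v+1-m)) = (\<Sum>j\<in>{0..<B}. f (j+m+1-m))"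
    by (rule sum.shift_bounds_nat_ivl)
  then show ?thesis by (simp add: lessThan_atLeast0 add.commute)
qed

locale ilab = ipart +
  fixes \<phi> :: "nat \<Rightarrow> nat \<Rightarrow> nat" and i :: nat
  assumes vl: "valid_labeling n k X \<phi>" and i1: "1 \<le> i" and ik: "i \<le> k"
begin

lemma L:
  assumes "1 \<le> u" "u < v" "v \<le> n" "u \<in> X p" "v \<in> X q"
  shows "(p = q \<longrightarrow> \<phi> u v = p) \<and> (p + 2 \<le> q \<longrightarrow> p < \<phi> u v \<and> \<phi> u v < q) \<and>
    (q = p + 1 \<longrightarrow> \<phi> u v = (if frac_idx k X u + frac_idx k X v \<le> 1 then p else p + 1))"
proof -
  have "\<forall>u v. 1 \<le> u \<and> u < v \<and> v \<le> n \<longrightarrow>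
        (let p = part_idx k X u; q = part_idx k X v in
          (p = q \<longrightarrow> \<phi> u v = p) \<and>
          (p + 2 \<le> q \<longrightarrow> p < \<phi> u v \<and> \<phi> u v < q) \<and>
          (q = p + 1 \<longrightarrow>
             \<phi> u v = (if frac_idx k X u + frac_idx k X v \<le> 1 then p else p + 1)))"
    using vl unfolding valid_labeling_def by simp
  then have "let p = part_idx k X u; q = part_idx k X v in
          (p = q \<longrightarrow> \<phi> u v = p) \<and>
          (p + 2 \<le> q \<longrightarrow> p < \<phi> u v \<and> \<phi> u v < q) \<and>
          (q = p + 1 \<longrightarrow>
             \<phi> u v = (if frac_idx k X u + frac_idx k X v \<le> 1 then p else p + 1))"
    using assms(1-3) by blast
  then show ?thesis unfolding Let_def pidx[OF assms(4)] pidx[OF assms(5)] .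
qed

lemma phi_uv:
  assumes "1 \<le> u" "u < v" "v \<in> X i"
  shows "\<phi> u v \<le> i \<and> (\<phi> u v = i \<longleftrightarrow> (u \<in> X i \<or> (u \<in> X (i-1) \<and> frac_idx k X u + frac_idx k X v > 1)))"
proof -
  have vn: "v \<le> n" using sub[of i] assms(3) by auto
  have "u \<in> {1..n}" using assms vn by auto
  then obtain p where up: "u \<in> X p" using cover by blast
  have pi: "p \<le> i" using mono[OF up assms(3) assms(2)] .
  note LL = L[OF assms(1,2) vn up assms(3)]
  consider "p = i" | "p + 1 = i" | "p + 2 \<le> i" using pi by linarith
  then show ?thesis
  proof cases
    case 1 then show ?thesis using LL up by simp
  next
    case 2
    then have "u \<notin> X i" using up disj[of p i] by auto
    moreover have "i - 1 = p" using 2 by simp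
    ultimately show ?thesis using LL up 2 by auto
  next
    case 3
    then have "p \<noteq> i - 1" "p \<noteq> i" by auto
    then have "u \<notin> X i" "u \<notin> X (i-1)" using up disj[of p i] disj[of p "i-1"] by auto
    then show ?thesis using LL 3 by auto
  qed
qed

lemma phi_vw:
  assumes "v < w" "w \<le> n" "v \<in> X i"
  shows "i \<le> \<phi> v w \<and> (\<phi> v w = i \<longleftrightarrow> (w \<in> X i \<or> (w \<in> X (i+1) \<and> frac_idx k X v + frac_idx k X w \<le> 1)))"
proof -
  have v1: "1 \<le> v" using sub[of i] assms(3) by auto
  have "w \<in> {1..n}" using assms v1 by auto
  then obtain q where wq: "w \<in> X q" using cover by blast
  have qi: "i \<le> q" using mono[OF assms(3) wq assms(1)] .
  note LL = L[OF v1 assms(1,2) assms(3) wq]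
  consider "q = i" | "q = i + 1" | "i + 2 \<le> q" using qi by linarith
  then show ?thesis
  proof cases
    case 1 then show ?thesis using LL wq by simp
  next
    case 2
    then have "w \<notin> X i" using wq disj[of q i] by auto
    then show ?thesis using LL wq 2 by auto
  next
    case 3
    then have "w \<notin> X i" "w \<notin> X (i+1)" using wq disj[of q i] disj[of q "i+1"] by auto
    then show ?thesis using LL 3 by auto
  qed
qed

definition Uset where "Uset v = {u \<in> X i. u < v} \<union> {u \<in> X (i-1). frac_idx k X u + frac_idx k X v > 1}"
definition Wset where "Wset v = {w \<in> X i. v < w} \<union> {w \<in> X (i+1). frac_idx k X v + frac_idx k X w \<le> 1}"

lemma bad_eq:
  "bad_triples n X \<phi> i = (\<lambda>(v,u,w). (u,v,w)) ` (SIGMA v:X i. Uset v \<times> Wset v)"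
proof (intro set_eqI iffI)
  fix t assume "t \<in> bad_triples n X \<phi> i"
  then obtain u v w where t: "t = (u,v,w)" and h: "1 \<le> u" "u < v" "v < w" "w \<le> n" "v \<in> X i"
     "\<not> (\<phi> u v < \<phi> v w)" unfolding bad_triples_def by auto
  have "\<phi> u v = i" "\<phi> v w = i" using phi_uv[OF h(1,2,5)] phi_vw[OF h(3,4,5)] h(6) by linarith+
  then have "u \<in> Uset v" "w \<in> Wset v" unfolding Uset_def Wset_def
    using phi_uv[OF h(1,2,5)] phi_vw[OF h(3,4,5)] h by auto
  then show "t \<in> (\<lambda>(v,u,w). (u,v,w)) ` (SIGMA v:X i. Uset v \<times> Wset v)"
    using t h(5) by force
next
  fix t assume "t \<in> (\<lambda>(v,u,w). (u,v,w)) ` (SIGMA v:X i. Uset v \<times> Wset v)"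
  then obtain u v w where t: "t = (u,v,w)" and h: "v \<in> X i" "u \<in> Uset v" "w \<in> Wset v" by auto
  have uv: "u < v"
  proof (cases "u \<in> X i")
    case True
    have "i \<noteq> i - 1" using i1 by simp
    then show ?thesis using True h(2) disj[of i "i-1"] unfolding Uset_def by auto
  next
    case False
    then have "u \<in> X (i-1)" using h(2) unfolding Uset_def by auto
    then show ?thesis using ord[OF _ h(1)] i1 by auto
  qed
  have vw: "v < w"
  proof (cases "w \<in> X i")
    case True then show ?thesis using h(3) disj[of i "i+1"] unfolding Wset_def by auto
  next
    case False
    then have "w \<in> X (i+1)" using h(3) unfolding Wset_def by auto
    then show ?thesis using ord[OF h(1)] by auto
  qed
  have u1: "1 \<le> u" using h(2) sub[of i] sub[of "i-1"] unfolding Uset_def by auto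
  have wn: "w \<le> n" using h(3) sub[of i] sub[of "i+1"] unfolding Wset_def by auto
  have "\<phi> u v = i" using phi_uv[OF u1 uv h(1)] h(2) unfolding Uset_def by auto
  moreover have "\<phi> v w = i" using phi_vw[OF vw wn h(1)] h(3) unfolding Wset_def by auto
  ultimately show "t \<in> bad_triples n X \<phi> i" unfolding bad_triples_def using t uv vw u1 wn h(1) by auto
qed

lemma card_bad:
  "card (bad_triples n X \<phi> i) = (\<Sum>v\<in>X i. card (Uset v) * card (Wset v))"
proof -
  have inj: "inj_on (\<lambda>(v,u,w). (u,v,w)) (SIGMA v:X i. Uset v \<times> Wset v)"
    by (auto simp: inj_on_def)
  have fU: "finite (Uset v)" for v unfolding Uset_def using fin by auto
  have fW: "finite (Wset v)" for v unfolding Wset_def using fin by auto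
  show ?thesis unfolding bad_eq card_image[OF inj]
    using fin fU fW by (simp add: card_cartesian_product)
qed


lemma cardU:
  assumes v: "v \<in> X i"
  shows "card (Uset v) = (v - Min (X i)) + (card (X (i-1)) - nat \<lfloor>real (card (X (i-1))) * (1 - frac_idx k X v)\<rfloor>)"
proof -
  define m where "m = Min (X i)"
  define B where "B = card (X i)"
  define m' where "m' = Min (X (i-1))"
  define A where "A = card (X (i-1))"
  define t where "t = frac_idx k X v"
  have Xi: "X i = {m..<m+B}" unfolding m_def B_def by (rule ivl)
  have Xi1: "X (i-1) = {m'..<m'+A}" unfolding m'_def A_def by (rule ivl)
  have vr: "m \<le> v" "v < m + B" using v Xi by auto
  have t: "t = real (v+1-m) / real B" unfolding t_def m_def B_def by (rule frac[OF v])
  have t0: "0 \<le> t" "t \<le> 1" using vr unfolding t by auto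
  have d: "i \<noteq> i - 1" using i1 by simp
  have c1: "card {u \<in> X i. u < v} = v - m"
  proof -
    have "{u \<in> X i. u < v} = {m..<v}" using Xi vr by auto
    then show ?thesis by simp
  qed
  have e2: "{u \<in> X (i-1). frac_idx k X u + frac_idx k X v > 1} = {u \<in> {m'..<m'+A}. real (u+1-m') / real A > 1 - t}"
  proof -
    have "frac_idx k X u = real (u+1-m') / real A" if "u \<in> X (i-1)" for u
      unfolding m'_def A_def by (rule frac[OF that])
    then show ?thesis using Xi1 unfolding t_def by auto
  qed
  have c2: "card {u \<in> X (i-1). frac_idx k X u + frac_idx k X v > 1} = A - nat \<lfloor>real A * (1 - t)\<rfloor>"
    unfolding e2 using t0 by (intro cnt_gt) auto
  have "card (Uset v) = card {u \<in> X i. u < v} + card {u \<in> X (i-1). frac_idx k X u + frac_idx k X v > 1}"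
    unfolding Uset_def using fin disj[OF d] by (intro card_Un_disjoint) auto
  then show ?thesis using c1 c2 unfolding m_def A_def t_def by simp
qed

lemma cardW:
  assumes v: "v \<in> X i"
  shows "card (Wset v) = (Min (X i) + card (X i) - (v + 1)) + nat \<lfloor>real (card (X (i+1))) * (1 - frac_idx k X v)\<rfloor>"
proof -
  define m where "m = Min (X i)"
  define B where "B = card (X i)"
  define m' where "m' = Min (X (i+1))"
  define C where "C = card (X (i+1))"
  define t where "t = frac_idx k X v"
  have Xi: "X i = {m..<m+B}" unfolding m_def B_def by (rule ivl)
  have Xi1: "X (i+1) = {m'..<m'+C}" unfolding m'_def C_def by (rule ivl)
  have vr: "m \<le> v" "v < m + B" using v Xi by auto
  have t: "t = real (v+1-m) / real B" unfolding t_def m_def B_def by (rule frac[OF v])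
  have t0: "0 \<le> t" "t \<le> 1" using vr unfolding t by auto
  have d: "i \<noteq> i + 1" by simp
  have c1: "card {w \<in> X i. v < w} = m + B - (v + 1)"
  proof -
    have "{w \<in> X i. v < w} = {v+1..<m+B}" using Xi vr by auto
    then show ?thesis by simp
  qed
  have e2: "{w \<in> X (i+1). frac_idx k X v + frac_idx k X w \<le> 1} = {u \<in> {m'..<m'+C}. real (u+1-m') / real C \<le> 1 - t}"
  proof -
    have "frac_idx k X u = real (u+1-m') / real C" if "u \<in> X (i+1)" for u
      unfolding m'_def C_def by (rule frac[OF that])
    then show ?thesis using Xi1 unfolding t_def by auto
  qed
  have c2: "card {w \<in> X (i+1). frac_idx k X v + frac_idx k X w \<le> 1} = nat \<lfloor>real C * (1 - t)\<rfloor>"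
    unfolding e2 using t0 by (intro cnt_le) auto
  have "card (Wset v) = card {w \<in> X i. v < w} + card {w \<in> X (i+1). frac_idx k X v + frac_idx k X w \<le> 1}"
    unfolding Wset_def using fin disj[OF d] by (intro card_Un_disjoint) auto
  then show ?thesis using c1 c2 unfolding m_def B_def C_def t_def by simp
qed


lemma main_bound:
  "\<bar>real (card (bad_triples n X \<phi> i)) - (real (card (X (i-1))) + real (card (X i))) * real (card (X i))
      * (real (card (X i)) + real (card (X (i+1)))) / 6\<bar> \<le> 3 * real n ^ 2"
proof -
  define a0 where "a0 = card (X (i-1))"
  define b0 where "b0 = card (X i)"
  define c0 where "c0 = card (X (i+1))"
  define m where "m = Min (X i)"
  have Xi: "X i = {m..<m+b0}" unfolding m_def b0_def by (rule ivl)
  show ?thesis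
  proof (cases "b0 = 0")
    case True
    then have "X i = {}" using Xi by simp
    then have "card (bad_triples n X \<phi> i) = 0" using card_bad by simp
    then show ?thesis using True unfolding b0_def by simp
  next
    case False
    then have B0: "0 < b0" by simp
    have d1: "i - 1 \<noteq> i" using i1 by simp
    have "card (X (i-1) \<union> X i) = a0 + b0" unfolding a0_def b0_def
      using fin disj[OF d1] by (intro card_Un_disjoint) auto
    moreover have "card (X (i-1) \<union> X i) \<le> card {1..n}" using sub fin
      by (intro card_mono) auto
    ultimately have ab: "real a0 + real b0 \<le> real n" by simp
    have d2: "i \<noteq> i + 1" by simp
    have "card (X i \<union> X (i+1)) = b0 + c0" unfolding c0_def b0_def
      using fin disj[OF d2] by (intro card_Un_disjoint) auto
    moreover have "card (X i \<union> X (i+1)) \<le> card {1..n}" using sub fin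
      by (intro card_mono) auto
    ultimately have bc: "real b0 + real c0 \<le> real n" by simp
    define t where "t v = real (v+1-m) / real b0" for v
    define x where "x v = real ((v - m) + (a0 - nat \<lfloor>real a0 * (1 - t v)\<rfloor>))" for v
    define y where "y v = real ((m + b0 - (v + 1)) + nat \<lfloor>real c0 * (1 - t v)\<rfloor>)" for v
    define XY where "XY v = t v * (a0+b0) * ((1 - t v) * (b0+c0))" for v
    have tv: "frac_idx k X v = t v" if "v \<in> X i" for v
      unfolding t_def m_def b0_def by (rule frac[OF that])
    have Sx: "real (card (bad_triples n X \<phi> i)) = (\<Sum>v\<in>X i. x v * y v)"
    proof -
      have "real (card (bad_triples n X \<phi> i)) = (\<Sum>v\<in>X i. real (card (Uset v)) * real (card (Wset v)))"
        unfolding card_bad by simp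
      also have "\<dots> = (\<Sum>v\<in>X i. x v * y v)"
      proof (rule sum.cong[OF refl])
        fix v assume v: "v \<in> X i"
        show "real (card (Uset v)) * real (card (Wset v)) = x v * y v"
          unfolding cardU[OF v] cardW[OF v] x_def y_def tv[OF v] a0_def c0_def m_def b0_def ..
      qed
      finally show ?thesis .
    qed
    have pv: "0 \<le> XY v - x v * y v \<and> XY v - x v * y v \<le> 2 * real n" if "v \<in> X i" for v
    proof -
      have vr: "m \<le> v" "v < m + b0" using that Xi by auto
      have t0: "0 \<le> t v" "t v \<le> 1" unfolding t_def using vr by auto
      note P = per_v[OF vr, of a0 c0, folded t_def, folded x_def y_def]
      have "t v * real (a0+b0) \<le> real (a0+b0)" using t0 by (intro mult_left_le_one_le) auto
      moreover have "(1 - t v) * real (b0+c0) \<le> real (b0+c0)" using t0 by (intro mult_left_le_one_le) auto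
      ultimately show ?thesis using P ab bc unfolding XY_def by simp
    qed
    have T: "(\<Sum>v\<in>X i. XY v) = (real a0 + real b0) * (real b0 + real c0) * (real b0 ^ 3 - real b0) / (6 * real b0 ^ 2)"
    proof -
      define g where "g j = real j / real b0 * (a0+b0) * ((1 - real j / real b0) * (b0+c0))" for j :: nat
      have "(\<Sum>v\<in>X i. XY v) = (\<Sum>v\<in>{m..<m+b0}. g (v+1-m))"
        unfolding Xi XY_def g_def t_def by simp
      also have "\<dots> = (\<Sum>j<b0. g (j+1))" by (rule shift)
      also have "\<dots> = (\<Sum>j<b0. ((real a0 + real b0) * (real b0 + real c0) / real b0 ^ 2) * (real (j+1) * (real b0 - real (j+1))))"
        unfolding g_def using B0 by (intro sum.cong refl) (simp add: field_simps power2_eq_square)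
      also have "\<dots> = ((real a0 + real b0) * (real b0 + real c0) / real b0 ^ 2) * ((real b0 ^ 3 - real b0) / 6)"
        by (simp only: sum_distrib_left[symmetric] sumj)
      finally show ?thesis using B0 by (simp add: field_simps)
    qed
    have low: "(\<Sum>v\<in>X i. x v * y v) \<le> (\<Sum>v\<in>X i. XY v)"
      using pv by (intro sum_mono) auto
    have "(\<Sum>v\<in>X i. XY v) - (\<Sum>v\<in>X i. x v * y v) = (\<Sum>v\<in>X i. XY v - x v * y v)"
      by (simp add: sum_subtractf)
    also have "\<dots> \<le> (\<Sum>v\<in>X i. 2 * real n)" using pv by (intro sum_mono) auto
    also have "\<dots> = real b0 * (2 * real n)" unfolding b0_def by simp
    also have "\<dots> \<le> real n * (2 * real n)" using ab by (intro mult_right_mono) auto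
    finally have up: "(\<Sum>v\<in>X i. XY v) - (\<Sum>v\<in>X i. x v * y v) \<le> 2 * real n ^ 2"
      by (simp add: power2_eq_square)
    define M where "M = (real a0 + real b0) * real b0 * (real b0 + real c0) / 6"
    have MT: "M - (\<Sum>v\<in>X i. XY v) = (real a0 + real b0) * (real b0 + real c0) / (6 * real b0)"
      unfolding T M_def using B0 by (simp add: field_simps power2_eq_square power3_eq_cube)
    have p1: "0 \<le> (real a0 + real b0) * (real b0 + real c0)" by simp
    have p2: "(real a0 + real b0) * (real b0 + real c0) \<le> real n * real n"
      using ab bc by (intro mult_mono) auto
    have "(real a0 + real b0) * (real b0 + real c0) / (6 * real b0) \<le> (real a0 + real b0) * (real b0 + real c0)"
      using B0 p1 by (simp add: divide_le_eq)
    then have "0 \<le> M - (\<Sum>v\<in>X i. XY v)" "M - (\<Sum>v\<in>X i. XY v) \<le> real n ^ 2"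
      using MT p1 p2 B0 by (simp_all add: power2_eq_square)
    then have "\<bar>(\<Sum>v\<in>X i. x v * y v) - M\<bar> \<le> 3 * real n ^ 2" using low up by linarith
    then show ?thesis unfolding Sx M_def a0_def b0_def c0_def .
  qed
qed

end

lemma c2: "real (n choose 2) = real n * (real n - 1) / 2"
proof (induction n)
  case 0 then show ?case by simp
next
  case (Suc n)
  have "Suc n choose 2 = (n choose 1) + (n choose 2)" by (simp add: numeral_2_eq_2)
  then show ?case using Suc by (simp add: field_simps)
qed

lemma c3: "real (n choose 3) = real n * (real n - 1) * (real n - 2) / 6"
proof (induction n)
  case 0 then show ?case by simp
next
  case (Suc n)
  have "Suc n choose 3 = (n choose 2) + (n choose 3)" by (simp add: numeral_3_eq_3 numeral_2_eq_2)
  then show ?case using Suc c2[of n] by (simp add: field_simps)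
qed

lemma lim6: "(\<lambda>n::nat. real n ^ 3 / real (n choose 3)) \<longlonglongrightarrow> 6"
proof -
  have "(\<lambda>n. 6 / ((1 - 1 / real n) * (1 - 2 / real n))) \<longlonglongrightarrow> 6 / ((1 - 0) * (1 - 0))"
    by (intro tendsto_intros lim_const_over_n) auto
  then have l: "(\<lambda>n. 6 / ((1 - 1 / real n) * (1 - 2 / real n))) \<longlonglongrightarrow> 6" by simp
  show ?thesis
  proof (rule Lim_transform_eventually[OF l])
    have "6 / ((1 - 1 / real n) * (1 - 2 / real n)) = real n ^ 3 / real (n choose 3)" if "n \<ge> 3" for n
    proof -
      have "real n - 1 \<noteq> 0" "real n - 2 \<noteq> 0" "real n \<noteq> 0" using that by auto
      then have "1 - 1 / real n = (real n - 1) / real n" "1 - 2 / real n = (real n - 2) / real n"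
        by (simp_all add: field_simps)
      then show ?thesis unfolding c3 using \<open>real n - 1 \<noteq> 0\<close> \<open>real n - 2 \<noteq> 0\<close> \<open>real n \<noteq> 0\<close>
        by (simp add: power3_eq_cube)
    qed
    then show "\<forall>\<^sub>F n in sequentially. 6 / ((1 - 1 / real n) * (1 - 2 / real n)) = real n ^ 3 / real (n choose 3)"
      unfolding eventually_sequentially by blast
  qed
qed

lemma final_lim:
  fixes S M :: "nat \<Rightarrow> real"
  assumes b: "\<And>n. \<bar>S n - M n\<bar> \<le> 3 * real n ^ 2"
    and m: "(\<lambda>n. M n / real n ^ 3) \<longlonglongrightarrow> L / 6"
  shows "(\<lambda>n. S n / real (n choose 3)) \<longlonglongrightarrow> L"
proof -
  have z: "(\<lambda>n. (S n - M n) / real n ^ 3) \<longlonglongrightarrow> 0"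
  proof (rule real_tendsto_sandwich)
    show "\<forall>\<^sub>F n in sequentially. - 3 / real n \<le> (S n - M n) / real n ^ 3"
         "\<forall>\<^sub>F n in sequentially. (S n - M n) / real n ^ 3 \<le> 3 / real n"
    proof -
      have that: "\<bar>(S n - M n) / real n ^ 3\<bar> \<le> 3 / real n" if "n \<ge> 1" for n
      proof -
        have p: "0 < real n ^ 3" using that by simp
        have "\<bar>(S n - M n) / real n ^ 3\<bar> = \<bar>S n - M n\<bar> / real n ^ 3" unfolding abs_divide using p by simp
        also have "\<dots> \<le> 3 * real n ^ 2 / real n ^ 3" by (rule divide_right_mono[OF b]) (use p in simp)
        also have "\<dots> = 3 / real n" using that by (simp add: field_simps power2_eq_square power3_eq_cube)
        finally show ?thesis .
      qed
      have "\<forall>n\<ge>1. - 3 / real n \<le> (S n - M n) / real n ^ 3 \<and> (S n - M n) / real n ^ 3 \<le> 3 / real n"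
      proof (intro allI impI)
        fix n :: nat assume n: "n \<ge> 1"
        have q: "\<bar>(S n - M n) / real n ^ 3\<bar> \<le> 3 / real n" by (rule that[OF n])
        have "- 3 / real n = - (3 / real n)" by simp
        then show "- 3 / real n \<le> (S n - M n) / real n ^ 3 \<and> (S n - M n) / real n ^ 3 \<le> 3 / real n"
          using q by linarith
      qed
      then show "\<forall>\<^sub>F n in sequentially. - 3 / real n \<le> (S n - M n) / real n ^ 3"
         "\<forall>\<^sub>F n in sequentially. (S n - M n) / real n ^ 3 \<le> 3 / real n"
        unfolding eventually_sequentially by blast+
    qed
    show "(\<lambda>n. - 3 / real n) \<longlonglongrightarrow> 0" using lim_const_over_n[of "-3::real"] by simp
    show "(\<lambda>n. 3 / real n) \<longlonglongrightarrow> 0" by (rule lim_const_over_n)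
  qed
  have "(\<lambda>n. M n / real n ^ 3 + (S n - M n) / real n ^ 3) \<longlonglongrightarrow> L / 6 + 0"
    by (intro tendsto_add m z)
  moreover have "M n / real n ^ 3 + (S n - M n) / real n ^ 3 = S n / real n ^ 3" for n
    by (simp add: diff_divide_distrib)
  ultimately have s: "(\<lambda>n. S n / real n ^ 3) \<longlonglongrightarrow> L / 6" by simp
  have "(\<lambda>n. (S n / real n ^ 3) * (real n ^ 3 / real (n choose 3))) \<longlonglongrightarrow> L / 6 * 6"
    by (intro tendsto_mult s lim6)
  then have l: "(\<lambda>n. (S n / real n ^ 3) * (real n ^ 3 / real (n choose 3))) \<longlonglongrightarrow> L" by simp
  show ?thesis
  proof (rule Lim_transform_eventually[OF l])
    have "S n / real n ^ 3 * (real n ^ 3 / real (n choose 3)) = S n / real (n choose 3)" if "n \<ge> 1" for n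
      using that by (simp del: of_nat_power)
    then show "\<forall>\<^sub>F n in sequentially. S n / real n ^ 3 * (real n ^ 3 / real (n choose 3)) = S n / real (n choose 3)"
      unfolding eventually_sequentially by blast
  qed
qed


theorem lemma4p4:
  fixes k i :: nat and a b c :: real
    and X :: "nat \<Rightarrow> nat \<Rightarrow> nat set" and \<phi> :: "nat \<Rightarrow> nat \<Rightarrow> nat \<Rightarrow> nat"
  assumes "k \<ge> 1" and "1 \<le> i" and "i \<le> k"
    and "a \<ge> 0" and "b \<ge> 0" and "c \<ge> 0"
    and "\<forall>n. interval_partition n k (X n)"
    and "\<forall>n. valid_labeling n k (X n) (\<phi> n)"
    and "(\<lambda>n. real (card (X n (i - 1))) / real n) \<longlonglongrightarrow> a"
    and "(\<lambda>n. real (card (X n i)) / real n) \<longlonglongrightarrow> b"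
    and "(\<lambda>n. real (card (X n (i + 1))) / real n) \<longlonglongrightarrow> c"
  shows "(\<lambda>n. real (card (bad_triples n (X n) (\<phi> n) i)) / real (n choose 3))
           \<longlonglongrightarrow> (a + b) * b * (b + c)"
proof -
  define S where "S n = real (card (bad_triples n (X n) (\<phi> n) i))" for n
  define M where "M n = (real (card (X n (i-1))) + real (card (X n i))) * real (card (X n i))
      * (real (card (X n i)) + real (card (X n (i+1)))) / 6" for n
  have bnd: "\<bar>S n - M n\<bar> \<le> 3 * real n ^ 2" for n
  proof -
    interpret ilab n k "X n" "\<phi> n" i
      using assms by unfold_locales auto
    show ?thesis unfolding S_def M_def by (rule main_bound)
  qed
  have eq: "M n / real n ^ 3 = (real (card (X n (i - 1))) / real n + real (card (X n i)) / real n)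
     * (real (card (X n i)) / real n) * (real (card (X n i)) / real n + real (card (X n (i + 1))) / real n) / 6" for n
    unfolding M_def by (cases "n = 0") (simp_all add: field_simps power3_eq_cube)
  have "(\<lambda>n. (real (card (X n (i - 1))) / real n + real (card (X n i)) / real n)
     * (real (card (X n i)) / real n) * (real (card (X n i)) / real n + real (card (X n (i + 1))) / real n) / 6)
     \<longlonglongrightarrow> (a + b) * b * (b + c) / 6"
    using assms(9-11) by (intro tendsto_intros) auto
  then have m: "(\<lambda>n. M n / real n ^ 3) \<longlonglongrightarrow> (a + b) * b * (b + c) / 6"
    unfolding eq .
  show ?thesis using final_lim[OF bnd m] unfolding S_def .
qed

end
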